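(* A PAF $\psi:\mathcal P^N\to\mathcal P$ is Level-SP and anonymous if and only if there exist $n+1$ weakly increasing, right-continuous functions $f_0,f_1,\dots,f_n:\Lambda\to[0,1]$ such that: (i) $f_k\le f_{k+1}$ pointwise for all $0\le k\le n-1$; (ii) if $\sup\Lambda\notin\Lambda$ then $\lim_{a\to\sup\Lambda}f_n(a)=1$, and otherwise $f_n(\sup\Lambda)=1$; (iii) if $\inf\Lambda\notin\Lambda$ then $\lim_{a\to\inf\Lambda}f_0(a)=0$; (iv) the associated CAF satisfies, for all $\mathbf P\in\mathcal C^N$ and $a\in\Lambda$, $$\Psi(\mathbf P)(a)=\operatorname{median}\big(P_1(a),\dots,P_n(a),f_0(a),\dots,f_n(a)\big).$$ Moreover, $\psi$ is unanimous if and only if such functions can be chosen with $f_0(a)=0$ and $f_n(a)=1$ for all $a\in\Lambda$.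
   Context: Let $N=\{1,\dots,n\}$ be a finite set of experts and $\Lambda\subseteq\mathbb R$ a nonempty Borel set with the usual order. $\mathcal P$ denotes the set of Borel probability measures on $\Lambda$ and $\mathcal C$ the set of CDFs on $\Lambda$; $\pi(p)(a)=p(\{x\in\Lambda:x\le a\})$. A PAF is a map $\psi:\mathcal P^N\to\mathcal P$; its associated CAF $\Psi:\mathcal C^N\to\mathcal C$ is defined by $\Psi(\pi(p_1),\dots,\pi(p_n))=\pi(\psi(p_1,\dots,p_n))$; $P_i=\pi(p_i)$, $\mathbf P=(P_1,\dots,P_n)$. $\mathbf z_{-i}(z_i')$ denotes the profile $\mathbf z$ with its $i$-th coordinate replaced by $z_i'$. $\psi$ is Level-SP if for every $i$, $\mathbf P\in\mathcal C^N$, $P_i'\in\mathcal C$, $a\in\Lambda$: $P_i(a)<\Psi(\mathbf P)(a)\Rightarrow\Psi(\mathbf P)(a)\le\Psi(\mathbf P_{-i}(P_i'))(a)$ and $P_i(a)>\Psi(\mathbf P)(a)\Rightarrow\Psi(\mathbf P)(a)\ge\Psi(\mathbf P_{-i}(P_i'))(a)$. $\psi$ is anonymous if $\psi(p_{\sigma(1)},\dots,p_{\sigma(n)})=\psi(p_1,\dots,p_n)$ for every permutation $\sigma$ of $N$ and every profile; unanimous if $\psi(p,\dots,p)=p$ for all $p$. The median of $2n+1$ real numbers is the $(n+1)$-th smallest. *)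

theory Defs
  imports "HOL-Probability.Probability"
begin

definition prob_measures :: "real set \<Rightarrow> real measure set" where
  "prob_measures Lam = {M. prob_space M \<and> space M = Lam \<and> sets M = sets (restrict_space borel Lam)}"

text \<open>The CDF map pi: pi(p)(a) = p({x in Lam. x <= a}); only meaningful for a in Lam.\<close>
definition cdf_on :: "real set \<Rightarrow> real measure \<Rightarrow> real \<Rightarrow> real" where
  "cdf_on Lam M a = measure M {x \<in> Lam. x \<le> a}"

definition profiles :: "nat \<Rightarrow> real set \<Rightarrow> (nat \<Rightarrow> real measure) set" where
  "profiles n Lam = PiE {1..n} (\<lambda>_. prob_measures Lam)"

definition is_PAF :: "nat \<Rightarrow> real set \<Rightarrow> ((nat \<Rightarrow> real measure) \<Rightarrow> real measure) \<Rightarrow> bool" where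
  "is_PAF n Lam psi \<longleftrightarrow> (\<forall>p \<in> profiles n Lam. psi p \<in> prob_measures Lam)"

text \<open>Level strategy-proofness, with the CAF Psi(pi p_1,...,pi p_n) = pi(psi p) unfolded.\<close>
definition level_SP :: "nat \<Rightarrow> real set \<Rightarrow> ((nat \<Rightarrow> real measure) \<Rightarrow> real measure) \<Rightarrow> bool" where
  "level_SP n Lam psi \<longleftrightarrow>
    (\<forall>i \<in> {1..n}. \<forall>p \<in> profiles n Lam. \<forall>q \<in> prob_measures Lam. \<forall>a \<in> Lam.
       (cdf_on Lam (p i) a < cdf_on Lam (psi p) a \<longrightarrow>
          cdf_on Lam (psi p) a \<le> cdf_on Lam (psi (p(i := q))) a) \<and>
       (cdf_on Lam (p i) a > cdf_on Lam (psi p) a \<longrightarrow>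
          cdf_on Lam (psi p) a \<ge> cdf_on Lam (psi (p(i := q))) a))"

definition anonymous :: "nat \<Rightarrow> real set \<Rightarrow> ((nat \<Rightarrow> real measure) \<Rightarrow> real measure) \<Rightarrow> bool" where
  "anonymous n Lam psi \<longleftrightarrow>
    (\<forall>\<sigma>. \<sigma> permutes {1..n} \<longrightarrow>
       (\<forall>p \<in> profiles n Lam. psi (\<lambda>i \<in> {1..n}. p (\<sigma> i)) = psi p))"

definition unanimous :: "nat \<Rightarrow> real set \<Rightarrow> ((nat \<Rightarrow> real measure) \<Rightarrow> real measure) \<Rightarrow> bool" where
  "unanimous n Lam psi \<longleftrightarrow> (\<forall>q \<in> prob_measures Lam. psi (\<lambda>i \<in> {1..n}. q) = q)"

definition median :: "real list \<Rightarrow> real" where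
  "median xs = sort xs ! (length xs div 2)"

definition phantom_conds ::
  "nat \<Rightarrow> real set \<Rightarrow> ((nat \<Rightarrow> real measure) \<Rightarrow> real measure) \<Rightarrow> (nat \<Rightarrow> real \<Rightarrow> real) \<Rightarrow> bool" where
  "phantom_conds n Lam psi f \<longleftrightarrow>
    (\<forall>k \<le> n. (\<forall>a \<in> Lam. 0 \<le> f k a \<and> f k a \<le> 1)
       \<and> (\<forall>a \<in> Lam. \<forall>b \<in> Lam. a \<le> b \<longrightarrow> f k a \<le> f k b)
       \<and> (\<forall>a \<in> Lam. (f k \<longlongrightarrow> f k a) (at a within (Lam \<inter> {a<..}))))
    \<and> (\<forall>k < n. \<forall>a \<in> Lam. f k a \<le> f (Suc k) a)
    \<and> (bdd_above Lam \<and> Sup Lam \<in> Lam \<longrightarrow> f n (Sup Lam) = 1)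
    \<and> (bdd_above Lam \<and> Sup Lam \<notin> Lam \<longrightarrow> (f n \<longlongrightarrow> 1) (at (Sup Lam) within Lam))
    \<and> (\<not> bdd_above Lam \<longrightarrow> (f n \<longlongrightarrow> 1) (at_top \<sqinter> principal Lam))
    \<and> (bdd_below Lam \<and> Inf Lam \<notin> Lam \<longrightarrow> (f 0 \<longlongrightarrow> 0) (at (Inf Lam) within Lam))
    \<and> (\<not> bdd_below Lam \<longrightarrow> (f 0 \<longlongrightarrow> 0) (at_bot \<sqinter> principal Lam))
    \<and> (\<forall>p \<in> profiles n Lam. \<forall>a \<in> Lam.
         cdf_on Lam (psi p) a =
           median (map (\<lambda>i. cdf_on Lam (p i) a) [1..<n+1] @ map (\<lambda>k. f k a) [0..<n+1]))"

end

theory Submission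
  imports Defs
begin


definition DD :: "real measure \<Rightarrow> real measure" where "DD M = distr M borel (\<lambda>x. x)"

lemma pm_facts:
  assumes "M \<in> prob_measures Lam"
  shows "prob_space M" "space M = Lam" "sets M = sets (restrict_space borel Lam)"
  using assms by (auto simp: prob_measures_def)

lemma id_meas: assumes "M \<in> prob_measures Lam" shows "(\<lambda>x. x) \<in> M \<rightarrow>\<^sub>M borel"
proof -
  have "(\<lambda>x. x) \<in> restrict_space borel Lam \<rightarrow>\<^sub>M borel"
    by (simp add: measurable_restrict_space1)
  then show ?thesis using pm_facts[OF assms] measurable_cong_sets by blast
qed

lemma DD_real: assumes "M \<in> prob_measures Lam" shows "real_distribution (DD M)"
  unfolding DD_def
  using prob_space.real_distribution_distr[OF pm_facts(1)[OF assms] id_meas[OF assms]] .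

lemma DD_cdf: assumes "M \<in> prob_measures Lam" shows "cdf (DD M) x = cdf_on Lam M x"
proof -
  have "cdf (DD M) x = measure M ({..x} \<inter> space M)"
    unfolding cdf_def DD_def
    by (subst measure_distr[OF id_meas[OF assms]]) auto
  also have "{..x} \<inter> space M = {y\<in>Lam. y \<le> x}" using pm_facts[OF assms] by auto
  finally show ?thesis by (simp add: cdf_on_def)
qed




lemma cdf_ext_eq:
  assumes M: "M \<in> prob_measures Lam" and N: "N \<in> prob_measures Lam"
    and eq: "\<And>a. a \<in> Lam \<Longrightarrow> cdf_on Lam M a = cdf_on Lam N a"
  shows "cdf (DD M) x = cdf (DD N) x"
proof -
  define S where "S = {y\<in>Lam. y \<le> x}"
  have cM: "cdf (DD M) x = measure M S" using DD_cdf[OF M] by (simp add: cdf_on_def S_def)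
  have cN: "cdf (DD N) x = measure N S" using DD_cdf[OF N] by (simp add: cdf_on_def S_def)
  show ?thesis
  proof (cases "S = {}")
    case True then show ?thesis using cM cN by simp
  next
    case False
    have bdd: "bdd_above S" unfolding S_def by (auto intro: bdd_aboveI[of _ x])
    define s where "s = Sup S"
    have sx: "s \<le> x" unfolding s_def using False by (auto intro!: cSup_least simp: S_def)
    have us: "\<And>y. y \<in> S \<Longrightarrow> y \<le> s" unfolding s_def using bdd by (simp add: cSup_upper)
    show ?thesis
    proof (cases "s \<in> Lam")
      case True
      have "S = {y\<in>Lam. y \<le> s}" using us sx by (auto simp: S_def)
      then show ?thesis using cM cN eq[OF True] by (simp add: cdf_on_def)
    next
      case sL: False
      have lt: "\<And>y. y \<in> S \<Longrightarrow> y < s" using us sL unfolding S_def by (metis (mono_tags, lifting) mem_Collect_eq order_le_less)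
      have "\<forall>k. \<exists>a. a \<in> S \<and> s - 1 / (real k + 1) < a"
      proof
        fix k
        have "s - 1 / (real k + 1) < s" by simp
        then show "\<exists>a. a \<in> S \<and> s - 1 / (real k + 1) < a"
          using less_cSupE[OF _ False] unfolding s_def by metis
      qed
      then obtain a where a: "\<And>k. a k \<in> S" "\<And>k. s - 1 / (real k + 1) < a k" by metis
      have alt: "\<And>k. a k < s" using lt a by auto
      have "(\<lambda>k. s - 1 / (real k + 1)) \<longlonglongrightarrow> s - 0"
      proof (intro tendsto_intros)
        show "(\<lambda>k. 1 / (real k + 1)) \<longlonglongrightarrow> 0"
          using LIMSEQ_inverse_real_of_nat by (simp add: inverse_eq_divide add.commute)
      qed
      then have lo: "(\<lambda>k. s - 1 / (real k + 1)) \<longlonglongrightarrow> s" by simp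
      have alim: "a \<longlonglongrightarrow> s"
        by (rule tendsto_sandwich[OF _ _ lo tendsto_const]) (use a alt in \<open>auto intro!: always_eventually less_imp_le\<close>)
      have fa: "filterlim a (at_left s) sequentially"
        unfolding filterlim_at using alim alt by (auto intro!: always_eventually simp: less_imp_neq)
      have SL: "Lam \<inter> {..<s} = S"
      proof
        show "S \<subseteq> Lam \<inter> {..<s}" using lt by (auto simp: S_def)
        show "Lam \<inter> {..<s} \<subseteq> S"
        proof
          fix y assume y: "y \<in> Lam \<inter> {..<s}"
          then obtain z where "z \<in> S" "y < z" using less_cSupE[OF _ False] unfolding s_def by auto
          then show "y \<in> S" using y by (auto simp: S_def)
        qed
      qed
      have lM: "(\<lambda>k. cdf (DD M) (a k)) \<longlonglongrightarrow> cdf (DD M) x"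
      proof -
        have "(cdf (DD M) \<longlongrightarrow> measure (DD M) {..<s}) (at_left s)"
          using finite_borel_measure.cdf_at_left[OF real_distribution.finite_borel_measure_M[OF DD_real[OF M]]] .
        moreover have "measure (DD M) {..<s} = measure M S"
          unfolding DD_def using pm_facts[OF M] SL
          by (subst measure_distr[OF id_meas[OF M]]) (auto simp: Int_commute)
        ultimately show ?thesis using fa cM by (auto intro: filterlim_compose)
      qed
      have lN: "(\<lambda>k. cdf (DD N) (a k)) \<longlonglongrightarrow> cdf (DD N) x"
      proof -
        have "(cdf (DD N) \<longlongrightarrow> measure (DD N) {..<s}) (at_left s)"
          using finite_borel_measure.cdf_at_left[OF real_distribution.finite_borel_measure_M[OF DD_real[OF N]]] .
        moreover have "measure (DD N) {..<s} = measure N S"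
          unfolding DD_def using pm_facts[OF N] SL
          by (subst measure_distr[OF id_meas[OF N]]) (auto simp: Int_commute)
        ultimately show ?thesis using fa cN by (auto intro: filterlim_compose)
      qed
      have "\<And>k. cdf (DD M) (a k) = cdf (DD N) (a k)"
        using eq a(1) DD_cdf[OF M] DD_cdf[OF N] by (simp add: S_def)
      then show ?thesis using lM lN LIMSEQ_unique by (metis (no_types) ext)
    qed
  qed
qed

lemma pm_unique:
  assumes L: "Lam \<in> sets borel" and M: "M \<in> prob_measures Lam" and N: "N \<in> prob_measures Lam"
    and eq: "\<And>a. a \<in> Lam \<Longrightarrow> cdf_on Lam M a = cdf_on Lam N a"
  shows "M = N"
proof -
  have "DD M = DD N"
    by (rule cdf_unique[OF DD_real[OF M] DD_real[OF N]]) (use cdf_ext_eq[OF M N eq] in auto)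
  show ?thesis
  proof (rule measure_eqI)
    show "sets M = sets N" using pm_facts[OF M] pm_facts[OF N] by simp
    fix A assume A: "A \<in> sets M"
    have AL: "A \<subseteq> Lam" using sets.sets_into_space[OF A] pm_facts[OF M] by simp
    have Ab: "A \<in> sets borel" using A pm_facts[OF M] L by (auto simp: sets_restrict_space_iff)
    have "emeasure (DD M) A = emeasure M A"
      unfolding DD_def using AL pm_facts[OF M] Ab
      by (subst emeasure_distr[OF id_meas[OF M]]) (auto simp: Int_absorb1 Int_absorb2)
    moreover have "emeasure (DD N) A = emeasure N A"
      unfolding DD_def using AL pm_facts[OF N] Ab
      by (subst emeasure_distr[OF id_meas[OF N]]) (auto simp: Int_absorb1 Int_absorb2)
    ultimately show "emeasure M A = emeasure N A" using \<open>DD M = DD N\<close> by simp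
  qed
qed




lemma cdf_on_DD: "M \<in> prob_measures Lam \<Longrightarrow> cdf_on Lam M = cdf (DD M)"
  using DD_cdf by (auto intro!: ext)

lemma cdf_bounds: assumes "M \<in> prob_measures Lam" shows "0 \<le> cdf_on Lam M a" "cdf_on Lam M a \<le> 1"
  using real_distribution.cdf_bounded_prob[OF DD_real[OF assms]]
    finite_borel_measure.cdf_nonneg[OF real_distribution.finite_borel_measure_M[OF DD_real[OF assms]]]
    cdf_on_DD[OF assms] by auto

lemma cdf_mono: assumes "M \<in> prob_measures Lam" "a \<le> b" shows "cdf_on Lam M a \<le> cdf_on Lam M b"
  using finite_borel_measure.cdf_nondecreasing[OF real_distribution.finite_borel_measure_M[OF DD_real[OF assms(1)]] assms(2)]
    cdf_on_DD[OF assms(1)] by auto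

lemma cdf_rc: assumes "M \<in> prob_measures Lam"
  shows "(cdf_on Lam M \<longlongrightarrow> cdf_on Lam M a) (at a within (Lam \<inter> {a<..}))"
proof -
  have "continuous (at_right a) (cdf (DD M))"
    using finite_borel_measure.cdf_is_right_cont[OF real_distribution.finite_borel_measure_M[OF DD_real[OF assms]]] .
  then have "(cdf (DD M) \<longlongrightarrow> cdf (DD M) a) (at_right a)"
    by (simp add: continuous_within)
  then show ?thesis using cdf_on_DD[OF assms] by (auto intro: tendsto_within_subset)
qed

lemma cdf_top: assumes "M \<in> prob_measures Lam"
  shows "(cdf_on Lam M \<longlongrightarrow> 1) (at_top \<sqinter> principal Lam)"
proof -
  have "(cdf (DD M) \<longlongrightarrow> 1) at_top" using real_distribution.cdf_lim_at_top_prob[OF DD_real[OF assms]] .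
  then have "(cdf (DD M) \<longlongrightarrow> 1) (at_top \<sqinter> principal Lam)" by (rule filterlim_mono[OF _ order_refl inf_le1])
  then show ?thesis by (simp add: cdf_on_DD[OF assms])
qed

lemma cdf_bot: assumes "M \<in> prob_measures Lam"
  shows "(cdf_on Lam M \<longlongrightarrow> 0) (at_bot \<sqinter> principal Lam)"
proof -
  have "(cdf (DD M) \<longlongrightarrow> 0) at_bot" using finite_borel_measure.cdf_lim_at_bot[OF real_distribution.finite_borel_measure_M[OF DD_real[OF assms]]] .
  then have "(cdf (DD M) \<longlongrightarrow> 0) (at_bot \<sqinter> principal Lam)" by (rule filterlim_mono[OF _ order_refl inf_le1])
  then show ?thesis by (simp add: cdf_on_DD[OF assms])
qed

lemma cdf_sup: assumes "M \<in> prob_measures Lam" "bdd_above Lam" "Sup Lam \<notin> Lam"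
  shows "(cdf_on Lam M \<longlongrightarrow> 1) (at (Sup Lam) within Lam)"
proof -
  let ?s = "Sup Lam"
  have sub: "Lam \<subseteq> {..<?s}"
  proof
    fix x assume "x \<in> Lam"
    then show "x \<in> {..<?s}" using assms(2,3) cSup_upper[of x Lam] by (cases "x = ?s") auto
  qed
  have "(cdf (DD M) \<longlongrightarrow> measure (DD M) {..<?s}) (at_left ?s)"
    using finite_borel_measure.cdf_at_left[OF real_distribution.finite_borel_measure_M[OF DD_real[OF assms(1)]]] .
  moreover have "measure (DD M) {..<?s} = 1"
  proof -
    have "measure (DD M) {..<?s} = measure M ({..<?s} \<inter> space M)"
      unfolding DD_def by (subst measure_distr[OF id_meas[OF assms(1)]]) auto
    also have "{..<?s} \<inter> space M = space M" using sub pm_facts[OF assms(1)] by auto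
    finally show ?thesis using prob_space.prob_space[OF pm_facts(1)[OF assms(1)]] by simp
  qed
  moreover have "at ?s within Lam \<le> at_left ?s" using sub by (rule at_le)
  ultimately have "(cdf (DD M) \<longlongrightarrow> 1) (at ?s within Lam)" by (metis filterlim_mono order_refl)
  then show ?thesis by (simp add: cdf_on_DD[OF assms(1)])
qed

lemma cdf_inf: assumes "M \<in> prob_measures Lam" "bdd_below Lam" "Inf Lam \<notin> Lam"
  shows "(cdf_on Lam M \<longlongrightarrow> 0) (at (Inf Lam) within Lam)"
proof -
  let ?s = "Inf Lam"
  have sub: "Lam \<subseteq> {?s<..}"
  proof
    fix x assume "x \<in> Lam"
    then show "x \<in> {?s<..}" using assms(2,3) cInf_lower[of x Lam] by (cases "x = ?s") auto
  qed
  have "continuous (at_right ?s) (cdf (DD M))"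
    using finite_borel_measure.cdf_is_right_cont[OF real_distribution.finite_borel_measure_M[OF DD_real[OF assms(1)]]] .
  then have "(cdf (DD M) \<longlongrightarrow> cdf (DD M) ?s) (at_right ?s)"
    by (simp add: continuous_within)
  moreover have "cdf (DD M) ?s = 0"
  proof -
    have e: "{y \<in> Lam. y \<le> ?s} = {}" using sub by auto
    show ?thesis using DD_cdf[OF assms(1), of ?s] unfolding cdf_on_def e by simp
  qed
  moreover have "at ?s within Lam \<le> at_right ?s" using sub by (rule at_le)
  ultimately have "(cdf (DD M) \<longlongrightarrow> 0) (at ?s within Lam)" by (metis filterlim_mono order_refl)
  then show ?thesis by (simp add: cdf_on_DD[OF assms(1)])
qed

definition dirac :: "real set \<Rightarrow> real \<Rightarrow> real measure" where
  "dirac Lam c = return (restrict_space borel Lam) c"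

lemma dirac_pm: assumes "c \<in> Lam" shows "dirac Lam c \<in> prob_measures Lam"
  unfolding prob_measures_def dirac_def using assms
  by (auto intro!: prob_space_return simp: space_restrict_space)

lemma dirac_cdf: assumes "Lam \<in> sets borel" "c \<in> Lam"
  shows "cdf_on Lam (dirac Lam c) a = (if c \<le> a then 1 else 0)"
proof -
  have "{y\<in>Lam. y \<le> a} \<in> sets (restrict_space borel Lam)"
    using assms(1) by (subst sets_restrict_space_iff) auto
  then show ?thesis unfolding cdf_on_def dirac_def using assms(2)
    by (simp add: measure_return indicator_def)
qed




lemma len_filter_sort: "length (filter P (sort xs)) = length (filter P xs)"
  by (metis mset_filter mset_sort size_mset)

lemma filter_take_drop_len: "length (filter P xs) = length (filter P (take k xs)) + length (filter P (drop k xs))"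
  by (metis append_take_drop_id filter_append length_append)

lemma med_ge:
  fixes xs :: "real list"
  assumes len: "length xs = 2*n+1" and c: "length (filter (\<lambda>x. x < y) xs) \<le> n"
  shows "y \<le> median xs"
proof (rule ccontr)
  assume "\<not> y \<le> median xs"
  then have my: "sort xs ! n < y" using len by (simp add: median_def)
  let ?s = "sort xs"
  have ls: "length ?s = 2*n+1" using len by simp
  have "\<forall>x\<in>set (take (Suc n) ?s). x < y"
  proof
    fix x assume "x \<in> set (take (Suc n) ?s)"
    then obtain j where j: "j < length (take (Suc n) ?s)" "x = take (Suc n) ?s ! j" by (metis in_set_conv_nth)
    then have "j \<le> n" "x = ?s ! j" using ls by auto
    then have "x \<le> ?s ! n" using sorted_nth_mono[OF sorted_sort, of j n xs] ls by simp
    then show "x < y" using my by simp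
  qed
  then have "filter (\<lambda>x. x < y) (take (Suc n) ?s) = take (Suc n) ?s" by simp
  then have "length (filter (\<lambda>x. x < y) (take (Suc n) ?s)) = Suc n" using ls by simp
  then have "length (filter (\<lambda>x. x < y) ?s) \<ge> Suc n" using filter_take_drop_len[of _ ?s "Suc n"] by simp
  then show False using c len_filter_sort[of _ xs] by simp
qed

lemma med_le:
  fixes xs :: "real list"
  assumes len: "length xs = 2*n+1" and c: "length (filter (\<lambda>x. x > y) xs) \<le> n"
  shows "median xs \<le> y"
proof (rule ccontr)
  assume "\<not> median xs \<le> y"
  then have my: "sort xs ! n > y" using len by (simp add: median_def)
  let ?s = "sort xs"
  have ls: "length ?s = 2*n+1" using len by simp
  have "\<forall>x\<in>set (drop n ?s). x > y"
  proof
    fix x assume "x \<in> set (drop n ?s)"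
    then obtain j where j: "j < length (drop n ?s)" "x = drop n ?s ! j" by (metis in_set_conv_nth)
    then have "n + j < length ?s" "x = ?s ! (n + j)" using ls by auto
    then have "?s ! n \<le> x" using sorted_nth_mono[OF sorted_sort, of n "n+j" xs] ls by simp
    then show "x > y" using my by simp
  qed
  then have "filter (\<lambda>x. x > y) (drop n ?s) = drop n ?s" by simp
  then have "length (filter (\<lambda>x. x > y) (drop n ?s)) = Suc n" using ls by simp
  then have "length (filter (\<lambda>x. x > y) ?s) \<ge> Suc n" using filter_take_drop_len[of _ ?s n] by simp
  then show False using c len_filter_sort[of _ xs] by simp
qed

lemma med_cnt_lt:
  fixes xs :: "real list"
  assumes len: "length xs = 2*n+1"
  shows "length (filter (\<lambda>x. x < median xs) xs) \<le> n"
proof -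
  let ?s = "sort xs" let ?m = "sort xs ! n"
  have ls: "length ?s = 2*n+1" using len by simp
  have "\<forall>x\<in>set (drop n ?s). \<not> x < ?m"
  proof
    fix x assume "x \<in> set (drop n ?s)"
    then obtain j where j: "j < length (drop n ?s)" "x = drop n ?s ! j" by (metis in_set_conv_nth)
    then have "n + j < length ?s" "x = ?s ! (n + j)" using ls by auto
    then have "?s ! n \<le> x" using sorted_nth_mono[OF sorted_sort, of n "n+j" xs] ls by simp
    then show "\<not> x < ?m" by simp
  qed
  then have "filter (\<lambda>x. x < ?m) (drop n ?s) = []" by (simp add: filter_empty_conv)
  moreover have "length (filter (\<lambda>x. x < ?m) (take n ?s)) \<le> n"
    by (metis length_filter_le length_take min.bounded_iff nle_le)
  ultimately have "length (filter (\<lambda>x. x < ?m) ?s) \<le> n" using filter_take_drop_len[of _ ?s n] by simp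
  then show ?thesis using len_filter_sort[of _ xs] len by (simp add: median_def)
qed

lemma med_cnt_gt:
  fixes xs :: "real list"
  assumes len: "length xs = 2*n+1"
  shows "length (filter (\<lambda>x. x > median xs) xs) \<le> n"
proof -
  let ?s = "sort xs" let ?m = "sort xs ! n"
  have ls: "length ?s = 2*n+1" using len by simp
  have "\<forall>x\<in>set (take (Suc n) ?s). \<not> x > ?m"
  proof
    fix x assume "x \<in> set (take (Suc n) ?s)"
    then obtain j where j: "j < length (take (Suc n) ?s)" "x = take (Suc n) ?s ! j" by (metis in_set_conv_nth)
    then have "j \<le> n" "x = ?s ! j" using ls by auto
    then have "x \<le> ?s ! n" using sorted_nth_mono[OF sorted_sort, of j n xs] ls by simp
    then show "\<not> x > ?m" by simp
  qed
  then have "filter (\<lambda>x. x > ?m) (take (Suc n) ?s) = []" by (simp add: filter_empty_conv)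
  moreover have "length (filter (\<lambda>x. x > ?m) (drop (Suc n) ?s)) \<le> n"
    using length_filter_le[of _ "drop (Suc n) ?s"] ls by simp
  ultimately have "length (filter (\<lambda>x. x > ?m) ?s) \<le> n" using filter_take_drop_len[of _ ?s "Suc n"] by simp
  then show ?thesis using len_filter_sort[of _ xs] len by (simp add: median_def)
qed

lemma med_eq:
  fixes xs :: "real list"
  assumes "length xs = 2*n+1" "length (filter (\<lambda>x. x < y) xs) \<le> n" "length (filter (\<lambda>x. x > y) xs) \<le> n"
  shows "median xs = y"
  using med_ge[OF assms(1,2)] med_le[OF assms(1,3)] by simp

lemma cnt_map_upt: "length (filter P (map f [a..<b])) = card {i \<in> {a..<b}. P (f i)}"
proof -
  have "length (filter P (map f [a..<b])) = length (filter (P \<circ> f) [a..<b])" by (simp add: filter_map)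
  also have "\<dots> = card ({x. (P \<circ> f) x} \<inter> set [a..<b])" by (rule distinct_length_filter) simp
  also have "{x. (P \<circ> f) x} \<inter> set [a..<b] = {i \<in> {a..<b}. P (f i)}" by auto
  finally show ?thesis .
qed




context
  fixes n :: nat and Lam :: "real set" and psi :: "(nat \<Rightarrow> real measure) \<Rightarrow> real measure"
  assumes Lb: "Lam \<in> sets borel" and paf: "is_PAF n Lam psi"
begin

abbreviation G where "G p a \<equiv> cdf_on Lam (psi p) a"

lemma prof_val: "p \<in> profiles n Lam \<Longrightarrow> i \<in> {1..n} \<Longrightarrow> p i \<in> prob_measures Lam"
  by (auto simp: profiles_def PiE_iff)

lemma prof_upd: "p \<in> profiles n Lam \<Longrightarrow> i \<in> {1..n} \<Longrightarrow> q \<in> prob_measures Lam \<Longrightarrow> p(i:=q) \<in> profiles n Lam"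
  by (auto simp: profiles_def PiE_iff extensional_def)

lemma prof_ext: "p \<in> profiles n Lam \<Longrightarrow> i \<notin> {1..n} \<Longrightarrow> p i = undefined"
  by (auto simp: profiles_def PiE_iff extensional_def)

lemma prof_restrict: "(\<And>i. i \<in> {1..n} \<Longrightarrow> f i \<in> prob_measures Lam) \<Longrightarrow> (\<lambda>i\<in>{1..n}. f i) \<in> profiles n Lam"
  by (auto simp: profiles_def PiE_iff)

lemma psi_pm: "p \<in> profiles n Lam \<Longrightarrow> psi p \<in> prob_measures Lam"
  using paf by (auto simp: is_PAF_def)

lemma G_bounds: "p \<in> profiles n Lam \<Longrightarrow> 0 \<le> G p a \<and> G p a \<le> 1"
  using cdf_bounds[OF psi_pm] by auto

lemma x_bounds: "p \<in> profiles n Lam \<Longrightarrow> i \<in> {1..n} \<Longrightarrow> 0 \<le> cdf_on Lam (p i) a \<and> cdf_on Lam (p i) a \<le> 1"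
  using cdf_bounds[OF prof_val] by auto

definition hyb :: "nat set \<Rightarrow> (nat \<Rightarrow> real measure) \<Rightarrow> (nat \<Rightarrow> real measure) \<Rightarrow> (nat \<Rightarrow> real measure)" where
  "hyb S q p = (\<lambda>i\<in>{1..n}. if i \<in> S then q i else p i)"

lemma hyb_prof: "p \<in> profiles n Lam \<Longrightarrow> (\<And>i. i \<in> S \<Longrightarrow> i \<in> {1..n} \<Longrightarrow> q i \<in> prob_measures Lam) \<Longrightarrow> hyb S q p \<in> profiles n Lam"
  unfolding hyb_def by (rule prof_restrict) (auto intro: prof_val)

lemma hyb_insert: "p \<in> profiles n Lam \<Longrightarrow> j \<in> {1..n} \<Longrightarrow> hyb (insert j T) q p = (hyb T q p)(j := q j)"
  unfolding hyb_def by (auto intro!: ext)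

lemma hyb_empty: "p \<in> profiles n Lam \<Longrightarrow> hyb {} q p = p"
  unfolding hyb_def by (auto intro!: ext simp: prof_ext)

lemma hyb_val: "i \<in> {1..n} \<Longrightarrow> hyb S q p i = (if i \<in> S then q i else p i)"
  unfolding hyb_def by auto

context assumes sp: "level_SP n Lam psi"
begin

lemma sp_lo: "p \<in> profiles n Lam \<Longrightarrow> i \<in> {1..n} \<Longrightarrow> q \<in> prob_measures Lam \<Longrightarrow> a \<in> Lam \<Longrightarrow>
   cdf_on Lam (p i) a < G p a \<Longrightarrow> G p a \<le> G (p(i:=q)) a"
  using sp unfolding level_SP_def by blast

lemma sp_hi: "p \<in> profiles n Lam \<Longrightarrow> i \<in> {1..n} \<Longrightarrow> q \<in> prob_measures Lam \<Longrightarrow> a \<in> Lam \<Longrightarrow>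
   cdf_on Lam (p i) a > G p a \<Longrightarrow> G p a \<ge> G (p(i:=q)) a"
  using sp unfolding level_SP_def by blast

lemma one_step:
  assumes p: "p \<in> profiles n Lam" and i: "i \<in> {1..n}" and q: "q \<in> prob_measures Lam" and a: "a \<in> Lam"
    and eq: "cdf_on Lam q a = cdf_on Lam (p i) a"
  shows "G (p(i:=q)) a = G p a"
proof -
  let ?r = "p(i:=q)"
  have pr: "?r \<in> profiles n Lam" using prof_upd[OF p i q] .
  have bk: "?r(i := p i) = p" by simp
  have pi: "p i \<in> prob_measures Lam" using prof_val[OF p i] .
  have 1: "cdf_on Lam (p i) a < G p a \<Longrightarrow> G p a \<le> G ?r a" using sp_lo[OF p i q a] .
  have 2: "cdf_on Lam (p i) a > G p a \<Longrightarrow> G p a \<ge> G ?r a" using sp_hi[OF p i q a] .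
  have 3: "cdf_on Lam (?r i) a < G ?r a \<Longrightarrow> G ?r a \<le> G p a" using sp_lo[OF pr i pi a] bk by simp
  have 4: "cdf_on Lam (?r i) a > G ?r a \<Longrightarrow> G ?r a \<ge> G p a" using sp_hi[OF pr i pi a] bk by simp
  have "cdf_on Lam (?r i) a = cdf_on Lam (p i) a" using eq by simp
  then show ?thesis using 1 2 3 4 by linarith
qed

lemma locality:
  assumes p: "p \<in> profiles n Lam" and p': "p' \<in> profiles n Lam" and a: "a \<in> Lam"
    and eq: "\<And>i. i \<in> {1..n} \<Longrightarrow> cdf_on Lam (p' i) a = cdf_on Lam (p i) a"
  shows "G p' a = G p a"
proof -
  have "m \<le> n \<Longrightarrow> G (hyb {1..m} p' p) a = G p a" for m
  proof (induction m)
    case 0 then show ?case using hyb_empty[OF p] by simp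
  next
    case (Suc m)
    have j: "Suc m \<in> {1..n}" using Suc.prems by simp
    have hp: "hyb {1..m} p' p \<in> profiles n Lam" by (rule hyb_prof[OF p]) (use prof_val[OF p'] in auto)
    have "hyb {1..Suc m} p' p = (hyb {1..m} p' p)(Suc m := p' (Suc m))"
      using hyb_insert[OF p j, of "{1..m}" p'] by (simp add: atLeastAtMostSuc_conv insert_commute)
    moreover have "G ((hyb {1..m} p' p)(Suc m := p' (Suc m))) a = G (hyb {1..m} p' p) a"
      by (rule one_step[OF hp j prof_val[OF p' j] a]) (simp add: hyb_val[OF j] eq[OF j])
    ultimately show ?case using Suc by (metis Suc_leD)
  qed
  moreover have "hyb {1..n} p' p = p'"
    unfolding hyb_def by (auto intro!: ext simp: prof_ext[OF p'])
  ultimately show ?thesis by (metis order_refl)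
qed

lemma lemmaA:
  assumes p: "p \<in> profiles n Lam" and S: "S \<subseteq> {1..n}" and a: "a \<in> Lam"
    and q: "\<And>i. i \<in> S \<Longrightarrow> q i \<in> prob_measures Lam"
    and lt: "\<And>i. i \<in> S \<Longrightarrow> cdf_on Lam (p i) a < G p a"
  shows "G p a \<le> G (hyb S q p) a"
proof -
  have fin: "finite S" using S finite_subset by blast
  have "finite T \<Longrightarrow> T \<subseteq> S \<Longrightarrow> G p a \<le> G (hyb T q p) a" for T
  proof (induction T rule: finite_induct)
    case empty then show ?case using hyb_empty[OF p] by simp
  next
    case (insert j T)
    have j: "j \<in> {1..n}" using insert S by auto
    have hp: "hyb T q p \<in> profiles n Lam" by (rule hyb_prof[OF p]) (use q insert in auto)
    have IH: "G p a \<le> G (hyb T q p) a" using insert by auto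
    have "cdf_on Lam (hyb T q p j) a = cdf_on Lam (p j) a" using insert by (simp add: hyb_val[OF j])
    also have "\<dots> < G p a" using lt insert by auto
    finally have "G (hyb T q p) a \<le> G ((hyb T q p)(j := q j)) a"
      using sp_lo[OF hp j q a] IH insert by auto
    moreover have e: "hyb (insert j T) q p = (hyb T q p)(j := q j)" by (rule hyb_insert[OF p j])
    ultimately show ?case using IH by (simp only: e)
  qed
  then show ?thesis using fin by simp
qed

lemma lemmaB:
  assumes p: "p \<in> profiles n Lam" and S: "S \<subseteq> {1..n}" and a: "a \<in> Lam"
    and q: "\<And>i. i \<in> S \<Longrightarrow> q i \<in> prob_measures Lam"
    and gt: "\<And>i. i \<in> S \<Longrightarrow> cdf_on Lam (p i) a > G p a"
  shows "G p a \<ge> G (hyb S q p) a"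
proof -
  have fin: "finite S" using S finite_subset by blast
  have "finite T \<Longrightarrow> T \<subseteq> S \<Longrightarrow> G p a \<ge> G (hyb T q p) a" for T
  proof (induction T rule: finite_induct)
    case empty then show ?case using hyb_empty[OF p] by simp
  next
    case (insert j T)
    have j: "j \<in> {1..n}" using insert S by auto
    have hp: "hyb T q p \<in> profiles n Lam" by (rule hyb_prof[OF p]) (use q insert in auto)
    have IH: "G p a \<ge> G (hyb T q p) a" using insert by auto
    have "cdf_on Lam (hyb T q p j) a = cdf_on Lam (p j) a" using insert by (simp add: hyb_val[OF j])
    also have "\<dots> > G p a" using gt insert by auto
    finally have "G (hyb T q p) a \<ge> G ((hyb T q p)(j := q j)) a"
      using sp_hi[OF hp j q a] IH insert by auto
    moreover have e: "hyb (insert j T) q p = (hyb T q p)(j := q j)" by (rule hyb_insert[OF p j])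
    ultimately show ?case using IH by (simp only: e)
  qed
  then show ?thesis using fin by simp
qed

end

lemma hyb_back: "p \<in> profiles n Lam \<Longrightarrow> hyb S p (hyb S q p) = p"
  unfolding hyb_def by (auto intro!: ext simp: prof_ext)

definition Pk :: "real \<Rightarrow> real \<Rightarrow> nat \<Rightarrow> nat \<Rightarrow> real measure" where
  "Pk a b k = (\<lambda>i\<in>{1..n}. if i \<le> k then dirac Lam a else dirac Lam b)"

definition phi :: "nat \<Rightarrow> real \<Rightarrow> real" where
  "phi k a = (if \<exists>b\<in>Lam. a < b then G (Pk a (SOME b. b \<in> Lam \<and> a < b) k) a else 1)"

lemma Pk_prof: "a \<in> Lam \<Longrightarrow> b \<in> Lam \<Longrightarrow> Pk a b k \<in> profiles n Lam"
  unfolding Pk_def by (rule prof_restrict) (auto intro: dirac_pm)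

lemma Pk_val: "i \<in> {1..n} \<Longrightarrow> a \<in> Lam \<Longrightarrow> b \<in> Lam \<Longrightarrow>
  cdf_on Lam (Pk a b k i) x = (if i \<le> k then (if a \<le> x then 1 else 0) else (if b \<le> x then 1 else 0))"
  unfolding Pk_def using dirac_cdf[OF Lb] by auto

lemma phi_max: "\<not> (\<exists>b\<in>Lam. a < b) \<Longrightarrow> phi k a = 1"
  unfolding phi_def by simp

lemma phi_bounds: "a \<in> Lam \<Longrightarrow> 0 \<le> phi k a \<and> phi k a \<le> 1"
proof (cases "\<exists>b\<in>Lam. a < b")
  case True
  then have "(SOME b. b \<in> Lam \<and> a < b) \<in> Lam" by (metis (mono_tags, lifting) someI_ex)
  moreover assume "a \<in> Lam"
  ultimately show ?thesis using True G_bounds[OF Pk_prof] unfolding phi_def by simp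
qed (simp add: phi_def)

context assumes sp: "level_SP n Lam psi"
begin

lemma phi_eq:
  assumes a: "a \<in> Lam" and b: "b \<in> Lam" and c: "c \<in> Lam" and ca: "c \<le> a" and ab: "a < b"
  shows "phi k a = G (Pk c b k) a"
proof -
  have ex: "\<exists>b\<in>Lam. a < b" using b ab by blast
  define b0 where "b0 = (SOME b. b \<in> Lam \<and> a < b)"
  have b0: "b0 \<in> Lam" "a < b0" unfolding b0_def using ex by (metis (mono_tags, lifting) someI_ex)+
  have "phi k a = G (Pk a b0 k) a" unfolding phi_def b0_def using ex by simp
  also have "\<dots> = G (Pk c b k) a"
    by (rule locality[OF sp Pk_prof[OF c b] Pk_prof[OF a b0(1)] a]) (use Pk_val a b c b0 ca ab in auto)
  finally show ?thesis .
qed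

lemma phi_step:
  assumes a: "a \<in> Lam" and "\<exists>b\<in>Lam. a < b" and k: "k < n"
  shows "phi k a \<le> phi (Suc k) a"
proof -
  obtain b where b: "b \<in> Lam" "a < b" using assms by blast
  have e1: "phi k a = G (Pk a b k) a" using phi_eq[OF a b(1) a order_refl b(2)] .
  have e2: "phi (Suc k) a = G (Pk a b (Suc k)) a" using phi_eq[OF a b(1) a order_refl b(2)] .
  have j: "Suc k \<in> {1..n}" using k by simp
  have upd: "(Pk a b k)(Suc k := dirac Lam a) = Pk a b (Suc k)"
    unfolding Pk_def using j by (auto intro!: ext)
  have v: "cdf_on Lam (Pk a b k (Suc k)) a = 0" using Pk_val[OF j a b(1)] b by simp
  show ?thesis
  proof (cases "0 < G (Pk a b k) a")
    case True
    then have "G (Pk a b k) a \<le> G ((Pk a b k)(Suc k := dirac Lam a)) a"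
      using sp_lo[OF sp Pk_prof[OF a b(1)] j dirac_pm[OF a] a] v by simp
    then show ?thesis using e1 e2 upd by simp
  next
    case False
    then show ?thesis using e1 e2 G_bounds[OF Pk_prof[OF a b(1)], of "Suc k" a] by simp
  qed
qed

lemma phi_mono_k:
  assumes a: "a \<in> Lam" and jk: "j \<le> k" and kn: "k \<le> n"
  shows "phi j a \<le> phi k a"
proof (cases "\<exists>b\<in>Lam. a < b")
  case True
  show ?thesis using jk kn
  proof (induction k)
    case 0 then show ?case by simp
  next
    case (Suc k)
    show ?case
    proof (cases "j = Suc k")
      case False
      then have "phi j a \<le> phi k a" using Suc by simp
      also have "\<dots> \<le> phi (Suc k) a" using phi_step[OF a True] Suc by simp
      finally show ?thesis .
    qed simp
  qed
qed (simp add: phi_max)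

end

lemma perm_exists:
  assumes U: "U \<subseteq> {1..n}" and U': "U' \<subseteq> {1..n}" and c: "card U = card U'"
  shows "\<exists>\<sigma>. \<sigma> permutes {1..n} \<and> (\<forall>i\<in>{1..n}. \<sigma> i \<in> U \<longleftrightarrow> i \<in> U')"
proof -
  have fU: "finite U" "finite U'" using U U' finite_subset by auto
  obtain h where h: "bij_betw h U' U" using finite_same_card_bij[OF fU(2) fU(1)] c by metis
  have "card ({1..n} - U') = card ({1..n} - U)" using c U U' fU by (simp add: card_Diff_subset)
  then obtain h2 where h2: "bij_betw h2 ({1..n} - U') ({1..n} - U)"
    using finite_same_card_bij[of "{1..n} - U'" "{1..n} - U"] by auto
  define \<sigma> where "\<sigma> = (\<lambda>i. if i \<in> U' then h i else if i \<in> {1..n} then h2 i else i)"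
  have b1: "bij_betw \<sigma> U' U" using h unfolding \<sigma>_def by (rule bij_betw_cong[THEN iffD1, rotated]) auto
  have b2: "bij_betw \<sigma> ({1..n} - U') ({1..n} - U)" using h2 unfolding \<sigma>_def
    by (rule bij_betw_cong[THEN iffD1, rotated]) auto
  have "bij_betw \<sigma> (U' \<union> ({1..n} - U')) (U \<union> ({1..n} - U))"
    by (rule bij_betw_combine[OF b1 b2]) auto
  moreover have "U' \<union> ({1..n} - U') = {1..n}" "U \<union> ({1..n} - U) = {1..n}" using U U' by auto
  ultimately have bb: "bij_betw \<sigma> {1..n} {1..n}" by simp
  have "\<sigma> permutes {1..n}" by (rule bij_imp_permutes[OF bb]) (use U' in \<open>auto simp: \<sigma>_def\<close>)
  moreover have "\<forall>i\<in>{1..n}. \<sigma> i \<in> U \<longleftrightarrow> i \<in> U'"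
  proof
    fix i assume i: "i \<in> {1..n}"
    show "\<sigma> i \<in> U \<longleftrightarrow> i \<in> U'"
    proof (cases "i \<in> U'")
      case True then show ?thesis using b1 by (auto simp: bij_betw_def)
    next
      case False then have "\<sigma> i \<in> {1..n} - U" using b2 i by (auto simp: bij_betw_def)
      then show ?thesis using False by auto
    qed
  qed
  ultimately show ?thesis by blast
qed

context assumes sp: "level_SP n Lam psi" and an: "anonymous n Lam psi"
begin

lemma anon_G: "\<sigma> permutes {1..n} \<Longrightarrow> p \<in> profiles n Lam \<Longrightarrow> G (\<lambda>i\<in>{1..n}. p (\<sigma> i)) a = G p a"
  using an unfolding anonymous_def by simp

lemma zero_one:
  assumes p: "p \<in> profiles n Lam" and p': "p' \<in> profiles n Lam" and a: "a \<in> Lam"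
    and v: "\<And>i. i \<in> {1..n} \<Longrightarrow> cdf_on Lam (p i) a = 0 \<or> cdf_on Lam (p i) a = 1"
    and v': "\<And>i. i \<in> {1..n} \<Longrightarrow> cdf_on Lam (p' i) a = 0 \<or> cdf_on Lam (p' i) a = 1"
    and c: "card {i\<in>{1..n}. cdf_on Lam (p i) a = 1} = card {i\<in>{1..n}. cdf_on Lam (p' i) a = 1}"
  shows "G p a = G p' a"
proof -
  have "\<exists>\<sigma>. \<sigma> permutes {1..n} \<and> (\<forall>i\<in>{1..n}. \<sigma> i \<in> {i\<in>{1..n}. cdf_on Lam (p i) a = 1} \<longleftrightarrow> i \<in> {i\<in>{1..n}. cdf_on Lam (p' i) a = 1})"
    by (rule perm_exists[OF _ _ c]) auto
  then obtain \<sigma> where s: "\<sigma> permutes {1..n}"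
    and si: "\<forall>i\<in>{1..n}. \<sigma> i \<in> {i\<in>{1..n}. cdf_on Lam (p i) a = 1} \<longleftrightarrow> i \<in> {i\<in>{1..n}. cdf_on Lam (p' i) a = 1}"
    by blast
  define r where "r = (\<lambda>i\<in>{1..n}. p (\<sigma> i))"
  have sin: "\<And>i. i \<in> {1..n} \<Longrightarrow> \<sigma> i \<in> {1..n}" using permutes_in_image[OF s] by blast
  have r: "r \<in> profiles n Lam" unfolding r_def by (rule prof_restrict) (use prof_val[OF p] sin in auto)
  have "G p' a = G r a"
  proof (rule locality[OF sp r p' a])
    fix i assume i: "i \<in> {1..n}"
    have ri: "r i = p (\<sigma> i)" using i by (simp add: r_def)
    show "cdf_on Lam (p' i) a = cdf_on Lam (r i) a"
      using si[rule_format, OF i] v[OF sin[OF i]] v'[OF i] i ri sin[OF i] by auto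
  qed
  also have "G r a = G p a" unfolding r_def by (rule anon_G[OF s p])
  finally show ?thesis by simp
qed

lemma card_le_k: "k \<le> n \<Longrightarrow> card {i\<in>{1..n}. i \<le> k} = k"
proof -
  assume "k \<le> n"
  then have "{i\<in>{1..n}. i \<le> k} = {1..k}" by auto
  then show ?thesis by simp
qed

lemma G_zero_one:
  assumes p: "p \<in> profiles n Lam" and a: "a \<in> Lam" and b: "b \<in> Lam" and ab: "a < b"
    and v: "\<And>i. i \<in> {1..n} \<Longrightarrow> cdf_on Lam (p i) a = 0 \<or> cdf_on Lam (p i) a = 1"
  shows "G p a = phi (card {i\<in>{1..n}. cdf_on Lam (p i) a = 1}) a"
proof -
  let ?k = "card {i\<in>{1..n}. cdf_on Lam (p i) a = 1}"
  have kn: "?k \<le> n" by (rule order_trans[OF card_mono[of "{1..n}"]]) auto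
  have "G p a = G (Pk a b ?k) a"
  proof (rule zero_one[OF p Pk_prof[OF a b] a v])
    fix i assume "i \<in> {1..n}"
    then show "cdf_on Lam (Pk a b ?k i) a = 0 \<or> cdf_on Lam (Pk a b ?k i) a = 1"
      using Pk_val[OF _ a b] by auto
  next
    have pv: "\<And>i. i\<in>{1..n} \<Longrightarrow> cdf_on Lam (Pk a b ?k i) a = (if i \<le> ?k then 1 else 0)"
      using Pk_val[OF _ a b] ab by simp
    have "{i\<in>{1..n}. cdf_on Lam (Pk a b ?k i) a = 1} = {i\<in>{1..n}. i \<le> ?k}"
      using pv by (auto split: if_splits)
    then show "?k = card {i\<in>{1..n}. cdf_on Lam (Pk a b ?k i) a = 1}"
      using card_le_k[OF kn] by simp
  qed
  also have "\<dots> = phi ?k a" using phi_eq[OF sp a b a order_refl ab] by simp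
  finally show ?thesis .
qed

end

context assumes sp: "level_SP n Lam psi" and an: "anonymous n Lam psi"
begin

lemma med_main:
  assumes p: "p \<in> profiles n Lam" and a: "a \<in> Lam" and b: "b \<in> Lam" and ab: "a < b"
  shows "G p a = median (map (\<lambda>i. cdf_on Lam (p i) a) [1..<n+1] @ map (\<lambda>k. phi k a) [0..<n+1])"
proof -
  define y where "y = G p a"
  define x where "x = (\<lambda>i. cdf_on Lam (p i) a)"
  define L where "L = {i\<in>{1..n}. x i < y}"
  define U where "U = {i\<in>{1..n}. x i > y}"
  define E where "E = {i\<in>{1..n}. x i = y}"
  define da where "da = dirac Lam a"
  define db where "db = dirac Lam b"
  have da: "da \<in> prob_measures Lam" "cdf_on Lam da a = 1" unfolding da_def using dirac_pm[OF a] dirac_cdf[OF Lb a] by auto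
  have db: "db \<in> prob_measures Lam" "cdf_on Lam db a = 0" unfolding db_def using dirac_pm[OF b] dirac_cdf[OF Lb b] ab by auto
  have xb: "\<And>i. i \<in> {1..n} \<Longrightarrow> 0 \<le> x i \<and> x i \<le> 1" unfolding x_def using x_bounds[OF p] by auto
  have yb: "0 \<le> y" "y \<le> 1" unfolding y_def using G_bounds[OF p] by auto
  have LUE: "L \<subseteq> {1..n}" "U \<subseteq> {1..n}" "E \<subseteq> {1..n}" unfolding L_def U_def E_def by auto
  define pL where "pL = hyb L (\<lambda>_. db) p"
  have pL: "pL \<in> profiles n Lam" unfolding pL_def by (rule hyb_prof[OF p]) (use db in auto)
  have "y \<le> G pL a" unfolding y_def pL_def
    by (rule lemmaA[OF sp p LUE(1) a]) (use db in \<open>auto simp: L_def x_def y_def\<close>)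
  moreover have "G pL a \<le> G (hyb L p pL) a"
  proof (rule lemmaA[OF sp pL LUE(1) a])
    fix i assume i: "i \<in> L"
    then show "p i \<in> prob_measures Lam" using prof_val[OF p] LUE by auto
    have "cdf_on Lam (pL i) a = 0" using i LUE db unfolding pL_def by (auto simp: hyb_val)
    moreover have "0 \<le> x i" "x i < y" using i xb LUE unfolding L_def by auto
    ultimately show "cdf_on Lam (pL i) a < G pL a" using \<open>y \<le> G pL a\<close> by linarith
  qed
  moreover have "hyb L p pL = p" unfolding pL_def by (rule hyb_back[OF p])
  ultimately have GpL: "G pL a = y" unfolding y_def by simp
  have pLv: "\<And>i. i \<in> {1..n} \<Longrightarrow> pL i = (if i \<in> L then db else p i)" unfolding pL_def by (simp add: hyb_val)
  define p1 where "p1 = hyb U (\<lambda>_. da) pL"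
  have p1: "p1 \<in> profiles n Lam" unfolding p1_def by (rule hyb_prof[OF pL]) (use da in auto)
  have "G pL a \<ge> G p1 a" unfolding p1_def
  proof (rule lemmaB[OF sp pL LUE(2) a])
    fix i assume i: "i \<in> U"
    then show "da \<in> prob_measures Lam" using da by auto
    have "i \<notin> L" using i unfolding U_def L_def by auto
    then show "cdf_on Lam (pL i) a > G pL a" using i LUE GpL pLv unfolding U_def x_def by auto
  qed
  moreover have "G p1 a \<ge> G (hyb U pL p1) a"
  proof (rule lemmaB[OF sp p1 LUE(2) a])
    fix i assume i: "i \<in> U"
    then show "pL i \<in> prob_measures Lam" using prof_val[OF pL] LUE by auto
    have "cdf_on Lam (p1 i) a = 1" using i LUE da unfolding p1_def by (auto simp: hyb_val)
    moreover have "y < x i" "x i \<le> 1" using i xb LUE unfolding U_def by auto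
    ultimately show "cdf_on Lam (p1 i) a > G p1 a" using \<open>G pL a \<ge> G p1 a\<close> GpL by linarith
  qed
  moreover have "hyb U pL p1 = pL" unfolding p1_def by (rule hyb_back[OF pL])
  ultimately have Gp1: "G p1 a = y" using GpL by (metis order_antisym)
  have p1v: "\<And>i. i \<in> {1..n} \<Longrightarrow> cdf_on Lam (p1 i) a = (if i \<in> L then 0 else if i \<in> U then 1 else y)"
  proof -
    fix i assume i: "i \<in> {1..n}"
    have "L \<inter> U = {}" unfolding L_def U_def by auto
    then show "cdf_on Lam (p1 i) a = (if i \<in> L then 0 else if i \<in> U then 1 else y)"
      using i da db pLv[OF i] unfolding p1_def hyb_val[OF i]
      by (auto simp: E_def L_def U_def x_def)
  qed
  define p2 where "p2 = hyb E (\<lambda>_. db) p1"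
  have p2: "p2 \<in> profiles n Lam" unfolding p2_def by (rule hyb_prof[OF p1]) (use db in auto)
  have p2v: "\<And>i. i \<in> {1..n} \<Longrightarrow> cdf_on Lam (p2 i) a = (if i \<in> U then 1 else 0)"
  proof -
    fix i assume i: "i \<in> {1..n}"
    show "cdf_on Lam (p2 i) a = (if i \<in> U then 1 else 0)"
      using i db p1v[OF i] unfolding p2_def hyb_val[OF i]
      by (auto simp: E_def L_def U_def x_def)
  qed
  have "{i\<in>{1..n}. cdf_on Lam (p2 i) a = 1} = U" using p2v LUE by (auto split: if_splits)
  then have Gp2: "G p2 a = phi (card U) a"
    using G_zero_one[OF sp an p2 a b ab] p2v by simp
  have lowph: "phi (card U) a \<le> y"
  proof (rule ccontr)
    assume "\<not> ?thesis"
    then have zy: "G p2 a > y" using Gp2 by simp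
    have "G p2 a \<le> G (hyb E p1 p2) a"
    proof (rule lemmaA[OF sp p2 LUE(3) a])
      fix i assume i: "i \<in> E"
      then show "p1 i \<in> prob_measures Lam" using prof_val[OF p1] LUE by auto
      have "i \<notin> U" using i unfolding E_def U_def by auto
      then show "cdf_on Lam (p2 i) a < G p2 a" using p2v i LUE zy yb by auto
    qed
    moreover have "hyb E p1 p2 = p1" unfolding p2_def by (rule hyb_back[OF p1])
    ultimately show False using zy Gp1 by simp
  qed
  define p3 where "p3 = hyb E (\<lambda>_. da) p1"
  have p3: "p3 \<in> profiles n Lam" unfolding p3_def by (rule hyb_prof[OF p1]) (use da in auto)
  have p3v: "\<And>i. i \<in> {1..n} \<Longrightarrow> cdf_on Lam (p3 i) a = (if i \<in> U \<union> E then 1 else 0)"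
  proof -
    fix i assume i: "i \<in> {1..n}"
    show "cdf_on Lam (p3 i) a = (if i \<in> U \<union> E then 1 else 0)"
      using i da p1v[OF i] unfolding p3_def hyb_val[OF i]
      by (auto simp: E_def L_def U_def x_def)
  qed
  have "{i\<in>{1..n}. cdf_on Lam (p3 i) a = 1} = U \<union> E" using p3v LUE by (auto split: if_splits)
  moreover have "card (U \<union> E) = card U + card E"
    by (rule card_Un_disjoint) (use LUE finite_subset in \<open>auto simp: U_def E_def\<close>)
  ultimately have Gp3: "G p3 a = phi (card U + card E) a"
    using G_zero_one[OF sp an p3 a b ab] p3v by simp
  have upph: "phi (card U + card E) a \<ge> y"
  proof (rule ccontr)
    assume "\<not> ?thesis"
    then have zy: "G p3 a < y" using Gp3 by simp
    have "G p3 a \<ge> G (hyb E p1 p3) a"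
    proof (rule lemmaB[OF sp p3 LUE(3) a])
      fix i assume i: "i \<in> E"
      then show "p1 i \<in> prob_measures Lam" using prof_val[OF p1] LUE by auto
      show "cdf_on Lam (p3 i) a > G p3 a" using p3v i LUE zy yb by auto
    qed
    moreover have "hyb E p1 p3 = p1" unfolding p3_def by (rule hyb_back[OF p1])
    ultimately show False using zy Gp1 by simp
  qed
  have fin: "finite L" "finite U" "finite E" using LUE by (meson finite_atLeastAtMost finite_subset)+
  have cardn: "card L + card U + card E = n"
  proof -
    have "L \<union> U \<union> E = {1..n}" unfolding L_def U_def E_def by auto
    moreover have "card (L \<union> U \<union> E) = card L + card U + card E"
    proof -
      have d1: "L \<inter> U = {}" "(L \<union> U) \<inter> E = {}" unfolding L_def U_def E_def by auto
      have "card (L \<union> U \<union> E) = card (L \<union> U) + card E" using fin d1 by (simp add: card_Un_disjoint)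
      also have "card (L \<union> U) = card L + card U" using fin d1 by (simp add: card_Un_disjoint)
      finally show ?thesis .
    qed
    ultimately show ?thesis by simp
  qed
  have UEn: "card U + card E \<le> n" using cardn by simp
  have e1: "{1..<n+1} = {1..n}" by auto
  let ?xs = "map (\<lambda>i. cdf_on Lam (p i) a) [1..<n+1] @ map (\<lambda>k. phi k a) [0..<n+1]"
  have len: "length ?xs = 2*n+1" by simp
  have c1: "length (filter (\<lambda>v. v < y) ?xs) \<le> n"
  proof -
    have "length (filter (\<lambda>v. v < y) (map (\<lambda>i. cdf_on Lam (p i) a) [1..<n+1])) = card L"
      unfolding cnt_map_upt e1 L_def x_def ..
    moreover have "length (filter (\<lambda>v. v < y) (map (\<lambda>k. phi k a) [0..<n+1])) \<le> card U + card E"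
    proof -
      have "{k\<in>{0..<n+1}. phi k a < y} \<subseteq> {0..<card U + card E}"
      proof
        fix k assume k: "k \<in> {k\<in>{0..<n+1}. phi k a < y}"
        show "k \<in> {0..<card U + card E}"
        proof (rule ccontr)
          assume "k \<notin> {0..<card U + card E}"
          then have "phi (card U + card E) a \<le> phi k a" using phi_mono_k[OF sp a] k by auto
          then show False using k upph by auto
        qed
      qed
      then have "card {k\<in>{0..<n+1}. phi k a < y} \<le> card U + card E"
        by (metis card_atLeastLessThan card_mono finite_atLeastLessThan minus_nat.diff_0)
      then show ?thesis unfolding cnt_map_upt .
    qed
    ultimately show ?thesis using cardn by simp
  qed
  have c2: "length (filter (\<lambda>v. v > y) ?xs) \<le> n"
  proof -
    have "length (filter (\<lambda>v. v > y) (map (\<lambda>i. cdf_on Lam (p i) a) [1..<n+1])) = card U"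
      unfolding cnt_map_upt e1 U_def x_def ..
    moreover have "length (filter (\<lambda>v. v > y) (map (\<lambda>k. phi k a) [0..<n+1])) \<le> n - card U"
    proof -
      have "{k\<in>{0..<n+1}. phi k a > y} \<subseteq> {card U + 1..<n+1}"
      proof
        fix k assume k: "k \<in> {k\<in>{0..<n+1}. phi k a > y}"
        show "k \<in> {card U + 1..<n+1}"
        proof (rule ccontr)
          assume "k \<notin> {card U + 1..<n+1}"
          then have "phi k a \<le> phi (card U) a" using phi_mono_k[OF sp a, of k "card U"] k UEn by auto
          then show False using k lowph by auto
        qed
      qed
      then have "card {k\<in>{0..<n+1}. phi k a > y} \<le> n - card U"
        by (metis card_atLeastLessThan card_mono finite_atLeastLessThan diff_Suc_Suc Suc_eq_plus1)
      then show ?thesis unfolding cnt_map_upt .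
    qed
    ultimately show ?thesis using cardn by simp
  qed
  show ?thesis using med_eq[OF len c1 c2] unfolding y_def by simp
qed

end

lemma Pk_n: "Pk c b n = Pk c c n"
  unfolding Pk_def by (auto intro!: ext)

lemma Pk_0: "Pk a b 0 = Pk b b 0"
  unfolding Pk_def by (auto intro!: ext)

lemma cdf_at_max: "M \<in> prob_measures Lam \<Longrightarrow> a \<in> Lam \<Longrightarrow> \<not> (\<exists>b\<in>Lam. a < b) \<Longrightarrow> cdf_on Lam M a = 1"
proof -
  assume M: "M \<in> prob_measures Lam" and "a \<in> Lam" "\<not> (\<exists>b\<in>Lam. a < b)"
  then have "{y\<in>Lam. y \<le> a} = space M" using pm_facts[OF M] by (auto simp: not_less)
  then show ?thesis unfolding cdf_on_def using prob_space.prob_space[OF pm_facts(1)[OF M]] by simp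
qed

lemma med_max:
  assumes p: "p \<in> profiles n Lam" and a: "a \<in> Lam" and mx: "\<not> (\<exists>b\<in>Lam. a < b)"
    and fb: "\<And>k. k \<le> n \<Longrightarrow> f k \<le> 1" and fc: "card {k\<in>{0..<n+1}. f k < 1} \<le> n"
  shows "G p a = median (map (\<lambda>i. cdf_on Lam (p i) a) [1..<n+1] @ map f [0..<n+1])"
proof -
  have G1: "G p a = 1" using cdf_at_max[OF psi_pm[OF p] a mx] .
  have x1: "\<And>i. i \<in> {1..n} \<Longrightarrow> cdf_on Lam (p i) a = 1" using cdf_at_max[OF prof_val[OF p] a mx] by auto
  let ?xs = "map (\<lambda>i. cdf_on Lam (p i) a) [1..<n+1] @ map f [0..<n+1]"
  have c1: "length (filter (\<lambda>v. v < 1) ?xs) \<le> n"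
  proof -
    have eql: "length (filter (\<lambda>v. v < 1) ?xs) = card {i\<in>{1..<n+1}. cdf_on Lam (p i) a < 1} + card {k\<in>{0..<n+1}. f k < 1}"
      by (simp only: filter_append length_append cnt_map_upt)
    have e: "{i\<in>{1..<n+1}. cdf_on Lam (p i) a < 1} = {}" using x1 by auto
    show ?thesis unfolding eql e using fc by simp
  qed
  have c2: "length (filter (\<lambda>v. v > 1) ?xs) \<le> n"
  proof -
    have e1: "{i\<in>{1..<n+1}. cdf_on Lam (p i) a > 1} = {}" using x1 by auto
    have "\<forall>k\<in>{0..<n+1}. f k \<le> 1" using fb by auto
    then have e2: "{k\<in>{0..<n+1}. f k > 1} = {}" by force
    have eql: "length (filter (\<lambda>v. v > 1) ?xs) = card {i\<in>{1..<n+1}. cdf_on Lam (p i) a > 1} + card {k\<in>{0..<n+1}. f k > 1}"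
      by (simp only: filter_append length_append cnt_map_upt)
    show ?thesis unfolding eql e1 e2 by simp
  qed
  show ?thesis using med_eq[OF _ c1 c2] G1 by simp
qed

context assumes sp: "level_SP n Lam psi" and an: "anonymous n Lam psi"
begin

lemma phi_mono_a:
  assumes a: "a \<in> Lam" and a': "a' \<in> Lam" and aa: "a \<le> a'"
  shows "phi k a \<le> phi k a'"
proof (cases "\<exists>b\<in>Lam. a' < b")
  case True
  then obtain b where b: "b \<in> Lam" "a' < b" by blast
  have "phi k a = G (Pk a b k) a" using phi_eq[OF sp a b(1) a order_refl] aa b by simp
  also have "\<dots> \<le> G (Pk a b k) a'" by (rule cdf_mono[OF psi_pm[OF Pk_prof[OF a b(1)]] aa])
  also have "\<dots> = phi k a'" using phi_eq[OF sp a' b(1) a aa b(2)] by simp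
  finally show ?thesis .
next
  case False
  then show ?thesis using phi_max phi_bounds[OF a] by simp
qed

lemma ev_within: "eventually (\<lambda>x. x \<in> S) (at a within S)"
  by (simp add: eventually_at_filter)

lemma phi_rc:
  assumes a: "a \<in> Lam"
  shows "(phi k \<longlongrightarrow> phi k a) (at a within (Lam \<inter> {a<..}))"
proof (cases "\<exists>b\<in>Lam. a < b")
  case True
  then obtain b where b: "b \<in> Lam" "a < b" by blast
  have e: "phi k a = G (Pk a b k) a" using phi_eq[OF sp a b(1) a order_refl b(2)] .
  have evb: "eventually (\<lambda>x. x < b) (at a within (Lam \<inter> {a<..}))"
    using order_tendstoD(2)[OF tendsto_ident_at b(2)] .
  have "eventually (\<lambda>x. G (Pk a b k) x = phi k x) (at a within (Lam \<inter> {a<..}))"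
  proof (rule eventually_mp[OF _ eventually_conj[OF ev_within evb]])
    show "\<forall>\<^sub>F x in at a within Lam \<inter> {a<..}. x \<in> Lam \<inter> {a<..} \<and> x < b \<longrightarrow> G (Pk a b k) x = phi k x"
      by (rule always_eventually) (use phi_eq[OF sp _ b(1) a] in auto)
  qed
  moreover have "(G (Pk a b k) \<longlongrightarrow> phi k a) (at a within (Lam \<inter> {a<..}))"
    using cdf_rc[OF psi_pm[OF Pk_prof[OF a b(1), of k]], of a] e by simp
  ultimately show ?thesis by (rule Lim_transform_eventually[rotated])
next
  case False
  then have "Lam \<inter> {a<..} = {}" by auto
  then show ?thesis by simp
qed

end

context assumes sp: "level_SP n Lam psi" and an: "anonymous n Lam psi"
begin

lemma lim_sup:
  assumes c: "c \<in> Lam" and bd: "bdd_above Lam" and ns: "Sup Lam \<notin> Lam"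
  shows "(phi n \<longlongrightarrow> 1) (at (Sup Lam) within Lam)"
proof -
  have lt: "\<And>x. x \<in> Lam \<Longrightarrow> x < Sup Lam" using bd ns cSup_upper by (metis order_le_less)
  have ev: "eventually (\<lambda>x. c < x) (at (Sup Lam) within Lam)"
    using order_tendstoD(1)[OF tendsto_ident_at lt[OF c]] .
  have "eventually (\<lambda>x. G (Pk c c n) x = phi n x) (at (Sup Lam) within Lam)"
  proof (rule eventually_mp[OF _ eventually_conj[OF ev_within[OF sp an] ev]])
    show "\<forall>\<^sub>F x in at (Sup Lam) within Lam. x \<in> Lam \<and> c < x \<longrightarrow> G (Pk c c n) x = phi n x"
    proof (rule always_eventually, intro allI impI)
      fix x assume x: "x \<in> Lam \<and> c < x"
      then obtain b where b: "b \<in> Lam" "x < b" using lt[of x] less_cSupE[of x Lam] c by blast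
      show "G (Pk c c n) x = phi n x" using phi_eq[OF sp _ b(1) c _ b(2), of n] x Pk_n[of c b] by simp
    qed
  qed
  moreover have "(G (Pk c c n) \<longlongrightarrow> 1) (at (Sup Lam) within Lam)"
    using cdf_sup[OF psi_pm[OF Pk_prof[OF c c, of n]] bd ns] .
  ultimately show ?thesis by (rule Lim_transform_eventually[rotated])
qed

lemma lim_top:
  assumes c: "c \<in> Lam" and bd: "\<not> bdd_above Lam"
  shows "(phi n \<longlongrightarrow> 1) (at_top \<sqinter> principal Lam)"
proof -
  have ev: "eventually (\<lambda>x. x \<in> Lam \<longrightarrow> c \<le> x) at_top" using eventually_ge_at_top[of c] by (rule eventually_mono) simp
  have "eventually (\<lambda>x. G (Pk c c n) x = phi n x) (at_top \<sqinter> principal Lam)"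
    unfolding eventually_inf_principal
  proof (rule eventually_mono[OF ev], intro impI)
    fix x assume x: "x \<in> Lam" "x \<in> Lam \<longrightarrow> c \<le> x"
    obtain b where b: "b \<in> Lam" "x < b" using bd unfolding bdd_above_def by (meson not_le)
    show "G (Pk c c n) x = phi n x" using phi_eq[OF sp x(1) b(1) c _ b(2), of n] x Pk_n[of c b] by simp
  qed
  moreover have "(G (Pk c c n) \<longlongrightarrow> 1) (at_top \<sqinter> principal Lam)"
    using cdf_top[OF psi_pm[OF Pk_prof[OF c c, of n]]] .
  ultimately show ?thesis by (rule Lim_transform_eventually[rotated])
qed

lemma lim_inf:
  assumes c: "c \<in> Lam" and bd: "bdd_below Lam" and ns: "Inf Lam \<notin> Lam"
  shows "(phi 0 \<longlongrightarrow> 0) (at (Inf Lam) within Lam)"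
proof -
  have lt: "\<And>x. x \<in> Lam \<Longrightarrow> Inf Lam < x" using bd ns cInf_lower by (metis order_le_less)
  have ev: "eventually (\<lambda>x. x < c) (at (Inf Lam) within Lam)"
    using order_tendstoD(2)[OF tendsto_ident_at lt[OF c]] .
  have "eventually (\<lambda>x. G (Pk c c 0) x = phi 0 x) (at (Inf Lam) within Lam)"
  proof (rule eventually_mp[OF _ eventually_conj[OF ev_within[OF sp an] ev]])
    show "\<forall>\<^sub>F x in at (Inf Lam) within Lam. x \<in> Lam \<and> x < c \<longrightarrow> G (Pk c c 0) x = phi 0 x"
    proof (rule always_eventually, intro allI impI)
      fix x assume x: "x \<in> Lam \<and> x < c"
      show "G (Pk c c 0) x = phi 0 x" using phi_eq[OF sp _ c _ _ , of x x 0] x Pk_0[of x c] by simp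
    qed
  qed
  moreover have "(G (Pk c c 0) \<longlongrightarrow> 0) (at (Inf Lam) within Lam)"
    using cdf_inf[OF psi_pm[OF Pk_prof[OF c c, of 0]] bd ns] .
  ultimately show ?thesis by (rule Lim_transform_eventually[rotated])
qed

lemma lim_bot:
  assumes c: "c \<in> Lam" and bd: "\<not> bdd_below Lam"
  shows "(phi 0 \<longlongrightarrow> 0) (at_bot \<sqinter> principal Lam)"
proof -
  have ev: "eventually (\<lambda>x. x \<in> Lam \<longrightarrow> x < c) at_bot" using eventually_gt_at_bot[of c] by (rule eventually_mono) simp
  have "eventually (\<lambda>x. G (Pk c c 0) x = phi 0 x) (at_bot \<sqinter> principal Lam)"
    unfolding eventually_inf_principal
  proof (rule eventually_mono[OF ev], intro impI)
    fix x assume x: "x \<in> Lam" "x \<in> Lam \<longrightarrow> x < c"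
    show "G (Pk c c 0) x = phi 0 x" using phi_eq[OF sp x(1) c x(1) order_refl, of 0] x Pk_0[of x c] by simp
  qed
  moreover have "(G (Pk c c 0) \<longlongrightarrow> 0) (at_bot \<sqinter> principal Lam)"
    using cdf_bot[OF psi_pm[OF Pk_prof[OF c c, of 0]]] .
  ultimately show ?thesis by (rule Lim_transform_eventually[rotated])
qed

lemma med_phi:
  assumes p: "p \<in> profiles n Lam" and a: "a \<in> Lam"
  shows "G p a = median (map (\<lambda>i. cdf_on Lam (p i) a) [1..<n+1] @ map (\<lambda>k. phi k a) [0..<n+1])"
proof (cases "\<exists>b\<in>Lam. a < b")
  case True
  then obtain b where "b \<in> Lam" "a < b" by blast
  then show ?thesis using med_main[OF sp an p a] by blast
next
  case False
  have e: "{k\<in>{0..<n+1}. phi k a < 1} = {}" using phi_max[OF False] by simp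
  show ?thesis by (rule med_max[OF p a False, of "\<lambda>k. phi k a"]) (use phi_bounds[OF a] in blast, unfold e, simp)
qed

lemma fwd: assumes ne: "Lam \<noteq> {}" shows "phantom_conds n Lam psi phi"
proof -
  obtain c where c: "c \<in> Lam" using ne by blast
  show ?thesis unfolding phantom_conds_def
  proof (intro conjI allI impI ballI)
    fix k a assume "a \<in> Lam" then show "0 \<le> phi k a" "phi k a \<le> 1" using phi_bounds by auto
  next
    fix k a b assume "a \<in> Lam" "b \<in> Lam" "a \<le> b" then show "phi k a \<le> phi k b" using phi_mono_a[OF sp an] by blast
  next
    fix k a assume "a \<in> Lam" then show "(phi k \<longlongrightarrow> phi k a) (at a within Lam \<inter> {a<..})" using phi_rc[OF sp an] by blast
  next
    fix k a assume "k < n" "a \<in> Lam" then show "phi k a \<le> phi (Suc k) a" using phi_mono_k[OF sp] by simp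
  next
    assume "bdd_above Lam \<and> Sup Lam \<in> Lam"
    then show "phi n (Sup Lam) = 1" by (intro phi_max) (meson cSup_upper not_le)
  next
    assume "bdd_above Lam \<and> Sup Lam \<notin> Lam" then show "(phi n \<longlongrightarrow> 1) (at (Sup Lam) within Lam)"
      using lim_sup[OF c] by blast
  next
    assume "\<not> bdd_above Lam" then show "(phi n \<longlongrightarrow> 1) (at_top \<sqinter> principal Lam)" by (rule lim_top[OF c])
  next
    assume "bdd_below Lam \<and> Inf Lam \<notin> Lam" then show "(phi 0 \<longlongrightarrow> 0) (at (Inf Lam) within Lam)"
      using lim_inf[OF c] by blast
  next
    assume "\<not> bdd_below Lam" then show "(phi 0 \<longlongrightarrow> 0) (at_bot \<sqinter> principal Lam)" by (rule lim_bot[OF c])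
  next
    fix p a assume "p \<in> profiles n Lam" "a \<in> Lam" then show "G p a = median (map (\<lambda>i. cdf_on Lam (p i) a) [1..<n+1] @ map (\<lambda>k. phi k a) [0..<n+1])"
      using med_phi by blast
  qed
qed

end

lemma cnt_sub:
  assumes "\<And>j. j \<in> {a..<b} \<Longrightarrow> P (g j) \<Longrightarrow> P (f j)"
  shows "length (filter P (map g [a..<b] @ ys)) \<le> length (filter P (map f [a..<b] @ ys))"
proof -
  have "card {j\<in>{a..<b}. P (g j)} \<le> card {j\<in>{a..<b}. P (f j)}"
    by (rule card_mono) (use assms in auto)
  then show ?thesis by (simp only: filter_append length_append cnt_map_upt)
qed

lemma median_mset: "mset xs = mset ys \<Longrightarrow> median xs = median ys"
proof -
  assume h: "mset xs = mset ys"
  have "sort xs = sort ys" using sorted_list_of_multiset_mset[of xs] sorted_list_of_multiset_mset[of ys] h by simp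
  moreover have "length xs = length ys" using h by (rule mset_eq_length)
  ultimately show ?thesis unfolding median_def by simp
qed

lemma bwd_sp:
  assumes pc: "phantom_conds n Lam psi f"
  shows "level_SP n Lam psi"
proof -
  have mf: "\<And>p a. p \<in> profiles n Lam \<Longrightarrow> a \<in> Lam \<Longrightarrow>
      G p a = median (map (\<lambda>i. cdf_on Lam (p i) a) [1..<n+1] @ map (\<lambda>k. f k a) [0..<n+1])"
  proof -
    have mf0: "\<forall>p\<in>profiles n Lam. \<forall>a\<in>Lam. G p a = median (map (\<lambda>i. cdf_on Lam (p i) a) [1..<n+1] @ map (\<lambda>k. f k a) [0..<n+1])"
      using pc unfolding phantom_conds_def by (elim conjE) assumption
    show "\<And>p a. p \<in> profiles n Lam \<Longrightarrow> a \<in> Lam \<Longrightarrow>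
      G p a = median (map (\<lambda>i. cdf_on Lam (p i) a) [1..<n+1] @ map (\<lambda>k. f k a) [0..<n+1])" using mf0 by blast
  qed
  show ?thesis unfolding level_SP_def
  proof (intro ballI conjI impI)
    fix i p q a assume i: "i \<in> {1..n}" and p: "p \<in> profiles n Lam" and q: "q \<in> prob_measures Lam" and a: "a \<in> Lam"
    have p': "p(i:=q) \<in> profiles n Lam" using prof_upd[OF p i q] .
    let ?ph = "map (\<lambda>k. f k a) [0..<n+1]"
    let ?xs = "map (\<lambda>i. cdf_on Lam (p i) a) [1..<n+1] @ ?ph"
    let ?xs' = "map (\<lambda>j. cdf_on Lam ((p(i:=q)) j) a) [1..<n+1] @ ?ph"
    have len: "length ?xs' = 2*n+1" by simp
    have len0: "length ?xs = 2*n+1" by simp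
    {
      assume lt: "cdf_on Lam (p i) a < G p a"
      have "length (filter (\<lambda>v. v < G p a) ?xs') \<le> length (filter (\<lambda>v. v < G p a) ?xs)"
        by (rule cnt_sub) (use lt in \<open>auto split: if_splits\<close>)
      also have "\<dots> \<le> n" using med_cnt_lt[OF len0] unfolding mf[OF p a, symmetric] .
      finally have "G p a \<le> median ?xs'" by (rule med_ge[OF len])
      then show "G p a \<le> G (p(i:=q)) a" unfolding mf[OF p' a] .
    }
    {
      assume gt: "cdf_on Lam (p i) a > G p a"
      have "length (filter (\<lambda>v. v > G p a) ?xs') \<le> length (filter (\<lambda>v. v > G p a) ?xs)"
        by (rule cnt_sub) (use gt in \<open>auto split: if_splits\<close>)
      also have "\<dots> \<le> n" using med_cnt_gt[OF len0] unfolding mf[OF p a, symmetric] .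
      finally have "median ?xs' \<le> G p a" by (rule med_le[OF len])
      then show "G p a \<ge> G (p(i:=q)) a" unfolding mf[OF p' a] .
    }
  qed
qed

lemma bwd_an:
  assumes pc: "phantom_conds n Lam psi f"
  shows "anonymous n Lam psi"
proof -
  have mf: "\<And>p a. p \<in> profiles n Lam \<Longrightarrow> a \<in> Lam \<Longrightarrow>
      G p a = median (map (\<lambda>i. cdf_on Lam (p i) a) [1..<n+1] @ map (\<lambda>k. f k a) [0..<n+1])"
  proof -
    have mf0: "\<forall>p\<in>profiles n Lam. \<forall>a\<in>Lam. G p a = median (map (\<lambda>i. cdf_on Lam (p i) a) [1..<n+1] @ map (\<lambda>k. f k a) [0..<n+1])"
      using pc unfolding phantom_conds_def by (elim conjE) assumption
    show "\<And>p a. p \<in> profiles n Lam \<Longrightarrow> a \<in> Lam \<Longrightarrow>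
      G p a = median (map (\<lambda>i. cdf_on Lam (p i) a) [1..<n+1] @ map (\<lambda>k. f k a) [0..<n+1])" using mf0 by blast
  qed
  show ?thesis unfolding anonymous_def
  proof (intro allI impI ballI)
    fix \<sigma> p assume s: "\<sigma> permutes {1..n}" and p: "p \<in> profiles n Lam"
    have sin: "\<And>i. i \<in> {1..n} \<Longrightarrow> \<sigma> i \<in> {1..n}" using permutes_in_image[OF s] by blast
    define r where "r = (\<lambda>i\<in>{1..n}. p (\<sigma> i))"
    have r: "r \<in> profiles n Lam" unfolding r_def by (rule prof_restrict) (use prof_val[OF p] sin in auto)
    have e1: "{1..<n+1} = {1..n}" by auto
    show "psi r = psi p"
    proof (rule pm_unique[OF Lb psi_pm[OF r] psi_pm[OF p]])
      fix a assume a: "a \<in> Lam"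
      let ?h = "\<lambda>i. cdf_on Lam (p i) a"
      have m1: "map (\<lambda>i. cdf_on Lam (r i) a) [1..<n+1] = map (?h \<circ> \<sigma>) [1..<n+1]"
        by (rule map_cong) (auto simp: r_def)
      have "mset (map (?h \<circ> \<sigma>) [1..<n+1]) = image_mset ?h (image_mset \<sigma> (mset_set {1..<n+1}))"
        by (simp only: mset_map mset_upt multiset.map_comp)
      also have "image_mset \<sigma> (mset_set {1..<n+1}) = mset_set (\<sigma> ` {1..<n+1})"
        by (rule image_mset_mset_set) (use permutes_inj_on[OF s] in auto)
      also have "\<sigma> ` {1..<n+1} = {1..<n+1}" using permutes_image[OF s] e1 by simp
      also have "image_mset ?h (mset_set {1..<n+1}) = mset (map ?h [1..<n+1])" by (simp only: mset_map mset_upt)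
      finally have mm: "mset (map (\<lambda>i. cdf_on Lam (r i) a) [1..<n+1]) = mset (map ?h [1..<n+1])" unfolding m1 .
      have "mset (map (\<lambda>i. cdf_on Lam (r i) a) [1..<n+1] @ map (\<lambda>k. f k a) [0..<n+1])
          = mset (map ?h [1..<n+1] @ map (\<lambda>k. f k a) [0..<n+1])" by (simp only: mset_append mm)
      then have "median (map (\<lambda>i. cdf_on Lam (r i) a) [1..<n+1] @ map (\<lambda>k. f k a) [0..<n+1])
          = median (map ?h [1..<n+1] @ map (\<lambda>k. f k a) [0..<n+1])" by (rule median_mset)
      then show "G r a = G p a" using mf[OF r a] mf[OF p a] by simp
    qed
  qed
qed

lemma bwd_un:
  assumes pc: "phantom_conds n Lam psi f" and f0: "\<And>a. a \<in> Lam \<Longrightarrow> f 0 a = 0"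
    and fn: "\<And>a. a \<in> Lam \<Longrightarrow> f n a = 1"
  shows "unanimous n Lam psi"
proof -
  have mf: "\<And>p a. p \<in> profiles n Lam \<Longrightarrow> a \<in> Lam \<Longrightarrow>
      G p a = median (map (\<lambda>i. cdf_on Lam (p i) a) [1..<n+1] @ map (\<lambda>k. f k a) [0..<n+1])"
  proof -
    have mf0: "\<forall>p\<in>profiles n Lam. \<forall>a\<in>Lam. G p a = median (map (\<lambda>i. cdf_on Lam (p i) a) [1..<n+1] @ map (\<lambda>k. f k a) [0..<n+1])"
      using pc unfolding phantom_conds_def by (elim conjE) assumption
    show "\<And>p a. p \<in> profiles n Lam \<Longrightarrow> a \<in> Lam \<Longrightarrow>
      G p a = median (map (\<lambda>i. cdf_on Lam (p i) a) [1..<n+1] @ map (\<lambda>k. f k a) [0..<n+1])" using mf0 by blast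
  qed
  show ?thesis unfolding unanimous_def
  proof
    fix q assume q: "q \<in> prob_measures Lam"
    define p where "p = (\<lambda>i\<in>{1..n}. q)"
    have p: "p \<in> profiles n Lam" unfolding p_def by (rule prof_restrict) (use q in auto)
    show "psi p = q"
    proof (rule pm_unique[OF Lb psi_pm[OF p] q])
      fix a assume a: "a \<in> Lam"
      define t where "t = cdf_on Lam q a"
      have tb: "0 \<le> t" "t \<le> 1" unfolding t_def using cdf_bounds[OF q] by auto
      let ?xs = "map (\<lambda>i. cdf_on Lam (p i) a) [1..<n+1] @ map (\<lambda>k. f k a) [0..<n+1]"
      have pv: "\<And>i. i \<in> {1..<n+1} \<Longrightarrow> cdf_on Lam (p i) a = t" unfolding p_def t_def by auto
      have c1: "length (filter (\<lambda>v. v < t) ?xs) \<le> n"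
      proof -
        have eql: "length (filter (\<lambda>v. v < t) ?xs) = card {i\<in>{1..<n+1}. cdf_on Lam (p i) a < t} + card {k\<in>{0..<n+1}. f k a < t}"
          by (simp only: filter_append length_append cnt_map_upt)
        have e: "{i\<in>{1..<n+1}. cdf_on Lam (p i) a < t} = {}" using pv by auto
        have "{k\<in>{0..<n+1}. f k a < t} \<subseteq> {0..<n}"
        proof
          fix k assume k: "k \<in> {k\<in>{0..<n+1}. f k a < t}"
          then have "k \<noteq> n" using fn[OF a] tb by auto
          then show "k \<in> {0..<n}" using k by auto
        qed
        then have "card {k\<in>{0..<n+1}. f k a < t} \<le> n" by (metis card_atLeastLessThan card_mono finite_atLeastLessThan minus_nat.diff_0)
        then show ?thesis unfolding eql e by simp
      qed
      have c2: "length (filter (\<lambda>v. v > t) ?xs) \<le> n"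
      proof -
        have eql: "length (filter (\<lambda>v. v > t) ?xs) = card {i\<in>{1..<n+1}. cdf_on Lam (p i) a > t} + card {k\<in>{0..<n+1}. f k a > t}"
          by (simp only: filter_append length_append cnt_map_upt)
        have e: "{i\<in>{1..<n+1}. cdf_on Lam (p i) a > t} = {}" using pv by auto
        have "{k\<in>{0..<n+1}. f k a > t} \<subseteq> {1..<n+1}"
        proof
          fix k assume k: "k \<in> {k\<in>{0..<n+1}. f k a > t}"
          have "k \<noteq> 0"
          proof
            assume "k = 0" then show False using k f0[OF a] tb by simp
          qed
          then show "k \<in> {1..<n+1}" using k by auto
        qed
        then have "card {k\<in>{0..<n+1}. f k a > t} \<le> n" by (metis card_atLeastLessThan card_mono finite_atLeastLessThan diff_add_inverse2)
        then show ?thesis unfolding eql e by simp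
      qed
      show "G p a = cdf_on Lam q a" using mf[OF p a] med_eq[OF _ c1 c2] t_def by simp
    qed
  qed
qed

context assumes sp: "level_SP n Lam psi" and an: "anonymous n Lam psi" and un: "unanimous n Lam psi" and n1: "n \<ge> 1"
begin

lemma psi_const: "q \<in> prob_measures Lam \<Longrightarrow> psi (\<lambda>i\<in>{1..n}. q) = q"
  using un unfolding unanimous_def by blast

lemma phi0: assumes a: "a \<in> Lam" and b: "b \<in> Lam" and ab: "a < b" shows "phi 0 a = 0"
proof -
  have "Pk a b 0 = (\<lambda>i\<in>{1..n}. dirac Lam b)" unfolding Pk_def by (auto intro!: ext)
  then have "psi (Pk a b 0) = dirac Lam b" using psi_const[OF dirac_pm[OF b]] by simp
  then show ?thesis using phi_eq[OF sp a b a order_refl ab, of 0] dirac_cdf[OF Lb b] ab by simp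
qed

lemma phin: assumes a: "a \<in> Lam" shows "phi n a = 1"
proof (cases "\<exists>b\<in>Lam. a < b")
  case True
  then obtain b where b: "b \<in> Lam" "a < b" by blast
  have "Pk a b n = (\<lambda>i\<in>{1..n}. dirac Lam a)" unfolding Pk_def by (auto intro!: ext)
  then have "psi (Pk a b n) = dirac Lam a" using psi_const[OF dirac_pm[OF a]] by simp
  then show ?thesis using phi_eq[OF sp a b(1) a order_refl b(2), of n] dirac_cdf[OF Lb a] by simp
qed (simp add: phi_max)

lemma fwd_un: assumes ne: "Lam \<noteq> {}"
  shows "phantom_conds n Lam psi (\<lambda>k a. if k = 0 then 0 else phi k a)
     \<and> (\<forall>a\<in>Lam. (\<lambda>k a. if k = 0 then 0 else phi k a) 0 a = 0 \<and> (\<lambda>k a. if k = 0 then 0 else phi k a) n a = 1)"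
proof -
  define fu where "fu = (\<lambda>(k::nat) (a::real). if k = 0 then 0 else phi k a)"
  have fnn: "fu n = phi n" using n1 unfolding fu_def by (auto intro!: ext)
  have fu0: "fu 0 = (\<lambda>_. 0)" unfolding fu_def by auto
  obtain c where c: "c \<in> Lam" using ne by blast
  have pc: "phantom_conds n Lam psi fu" unfolding phantom_conds_def
  proof (intro conjI allI impI ballI)
    fix k a assume "a \<in> Lam" then show "0 \<le> fu k a" "fu k a \<le> 1" using phi_bounds unfolding fu_def by auto
  next
    fix k a b assume "a \<in> Lam" "b \<in> Lam" "a \<le> b" then show "fu k a \<le> fu k b" using phi_mono_a[OF sp an] unfolding fu_def by auto
  next
    fix k a assume a: "a \<in> Lam" show "(fu k \<longlongrightarrow> fu k a) (at a within Lam \<inter> {a<..})"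
    proof (cases "k = 0")
      case True then show ?thesis unfolding fu_def by simp
    next
      case False then show ?thesis using phi_rc[OF sp an a, of k] unfolding fu_def by simp
    qed
  next
    fix k a assume k: "k < n" and a: "a \<in> Lam" then show "fu k a \<le> fu (Suc k) a"
      using phi_mono_k[OF sp a, of k "Suc k"] phi_bounds[OF a, of "Suc k"] unfolding fu_def by auto
  next
    assume "bdd_above Lam \<and> Sup Lam \<in> Lam"
    then show "fu n (Sup Lam) = 1" unfolding fnn by (intro phi_max) (meson cSup_upper not_le)
  next
    assume "bdd_above Lam \<and> Sup Lam \<notin> Lam" then show "(fu n \<longlongrightarrow> 1) (at (Sup Lam) within Lam)"
      unfolding fnn using lim_sup[OF sp an c] by blast
  next
    assume "\<not> bdd_above Lam" then show "(fu n \<longlongrightarrow> 1) (at_top \<sqinter> principal Lam)" unfolding fnn by (rule lim_top[OF sp an c])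
  next
    assume "bdd_below Lam \<and> Inf Lam \<notin> Lam" then show "(fu 0 \<longlongrightarrow> 0) (at (Inf Lam) within Lam)"
      unfolding fu0 by simp
  next
    assume "\<not> bdd_below Lam" then show "(fu 0 \<longlongrightarrow> 0) (at_bot \<sqinter> principal Lam)" unfolding fu0 by simp
  next
    fix p a assume p: "p \<in> profiles n Lam" and a: "a \<in> Lam"
    show "G p a = median (map (\<lambda>i. cdf_on Lam (p i) a) [1..<n+1] @ map (\<lambda>k. fu k a) [0..<n+1])"
    proof (cases "\<exists>b\<in>Lam. a < b")
      case True
      then obtain b where b: "b \<in> Lam" "a < b" by blast
      have "map (\<lambda>k. fu k a) [0..<n+1] = map (\<lambda>k. phi k a) [0..<n+1]"
        by (rule map_cong) (auto simp: fu_def phi0[OF a b])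
      then show ?thesis using med_main[OF sp an p a b] by (simp only:)
    next
      case False
      have "{k\<in>{0..<n+1}. fu k a < 1} \<subseteq> {0}" using phi_max[OF False] unfolding fu_def by auto
      then have "card {k\<in>{0..<n+1}. fu k a < 1} \<le> card {0::nat}" by (rule card_mono[rotated]) simp
      then have e: "card {k\<in>{0..<n+1}. fu k a < 1} \<le> n" using n1 by simp
      have fb: "\<And>k. k \<le> n \<Longrightarrow> fu k a \<le> 1" using phi_bounds[OF a] by (simp add: fu_def)
      show ?thesis using med_max[OF p a False, of "\<lambda>k. fu k a", OF fb e] by simp
    qed
  qed
  have "\<forall>a\<in>Lam. fu 0 a = 0 \<and> fu n a = 1" using phin fnn fu0 by simp
  then show ?thesis using pc unfolding fu_def by simp
qed

end

end


theorem mainTheorem2: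
  fixes n :: nat and Lam :: "real set"
    and psi :: "(nat \<Rightarrow> real measure) \<Rightarrow> real measure"
  assumes "n \<ge> 1"
    and "Lam \<in> sets borel" and "Lam \<noteq> {}"
    and "is_PAF n Lam psi"
  shows "(level_SP n Lam psi \<and> anonymous n Lam psi \<longleftrightarrow> (\<exists>f. phantom_conds n Lam psi f))
     \<and> (level_SP n Lam psi \<and> anonymous n Lam psi \<longrightarrow>
          (unanimous n Lam psi \<longleftrightarrow>
             (\<exists>f. phantom_conds n Lam psi f \<and> (\<forall>a \<in> Lam. f 0 a = 0 \<and> f n a = 1))))"
proof (rule conjI)
  show "level_SP n Lam psi \<and> anonymous n Lam psi \<longleftrightarrow> (\<exists>f. phantom_conds n Lam psi f)"
  proof
    assume h: "level_SP n Lam psi \<and> anonymous n Lam psi"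
    show "\<exists>f. phantom_conds n Lam psi f" using fwd[OF assms(2,4) conjunct1[OF h] conjunct2[OF h] assms(3)] by blast
  next
    assume "\<exists>f. phantom_conds n Lam psi f"
    then obtain f where f: "phantom_conds n Lam psi f" by blast
    show "level_SP n Lam psi \<and> anonymous n Lam psi"
      using bwd_sp[OF assms(2,4) f] bwd_an[OF assms(2,4) f] by blast
  qed
  show "level_SP n Lam psi \<and> anonymous n Lam psi \<longrightarrow>
          (unanimous n Lam psi \<longleftrightarrow>
             (\<exists>f. phantom_conds n Lam psi f \<and> (\<forall>a \<in> Lam. f 0 a = 0 \<and> f n a = 1)))"
  proof
    assume h: "level_SP n Lam psi \<and> anonymous n Lam psi"
    show "unanimous n Lam psi \<longleftrightarrow> (\<exists>f. phantom_conds n Lam psi f \<and> (\<forall>a \<in> Lam. f 0 a = 0 \<and> f n a = 1))"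
    proof
      assume u: "unanimous n Lam psi"
      show "\<exists>f. phantom_conds n Lam psi f \<and> (\<forall>a \<in> Lam. f 0 a = 0 \<and> f n a = 1)"
        using fwd_un[OF assms(2,4) conjunct1[OF h] conjunct2[OF h] u assms(1) assms(3)] by blast
    next
      assume "\<exists>f. phantom_conds n Lam psi f \<and> (\<forall>a \<in> Lam. f 0 a = 0 \<and> f n a = 1)"
      then obtain f where f: "phantom_conds n Lam psi f" and f01: "\<forall>a \<in> Lam. f 0 a = 0 \<and> f n a = 1" by blast
      show "unanimous n Lam psi" using bwd_un[OF assms(2,4) f] f01 by blast
    qed
  qed
qed

end
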